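(* $rx_3(K_{2,t})=5$ for every $9\leq t\leq 20$, and $rx_3(K_{2,t})\geq 6$ for every $t\geq 21$.
   Context: An edge coloring of a graph $G$ is any assignment of colors to the edges (adjacent edges may receive the same color). A tree $T$ in an edge-colored graph is a rainbow tree if no two edges of $T$ have the same color. For $S\subseteq V(G)$, an $S$-tree is a subtree of $G$ containing all vertices of $S$. A $3$-rainbow coloring of $G$ is an edge coloring such that for every set $S$ of $3$ vertices of $G$ there is a rainbow $S$-tree in $G$. The $3$-rainbow index $rx_3(G)$ is the minimum number of colors in a $3$-rainbow coloring of $G$. $K_{2,t}$ denotes the complete bipartite graph with parts of sizes $2$ and $t$. *)

theory Defs
  imports Main
begin

definition graph :: "'a set \<Rightarrow> 'a set set \<Rightarrow> bool" where
  "graph V E \<longleftrightarrow> finite V \<and> (\<forall>e\<in>E. \<exists>u v. u \<noteq> v \<and> e = {u, v} \<and> u \<in> V \<and> v \<in> V)"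

fun walk :: "'a set set \<Rightarrow> 'a list \<Rightarrow> bool" where
  "walk ET [] = False"
| "walk ET [x] = True"
| "walk ET (x # y # xs) = ({x, y} \<in> ET \<and> walk ET (y # xs))"

definition connected_graph :: "'a set \<Rightarrow> 'a set set \<Rightarrow> bool" where
  "connected_graph VT ET \<longleftrightarrow>
     (\<forall>u\<in>VT. \<forall>v\<in>VT. \<exists>xs. walk ET xs \<and> set xs \<subseteq> VT \<and> hd xs = u \<and> last xs = v)"

definition has_cycle :: "'a set set \<Rightarrow> bool" where
  "has_cycle ET \<longleftrightarrow> (\<exists>xs. length xs \<ge> 3 \<and> distinct xs \<and> walk ET xs \<and> {last xs, hd xs} \<in> ET)"

definition is_tree :: "'a set \<Rightarrow> 'a set set \<Rightarrow> bool" where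
  "is_tree VT ET \<longleftrightarrow> VT \<noteq> {} \<and> (\<forall>e\<in>ET. e \<subseteq> VT) \<and> connected_graph VT ET \<and> \<not> has_cycle ET"

definition S_tree :: "'a set \<Rightarrow> 'a set set \<Rightarrow> 'a set \<Rightarrow> 'a set \<Rightarrow> 'a set set \<Rightarrow> bool" where
  "S_tree V E S VT ET \<longleftrightarrow> VT \<subseteq> V \<and> ET \<subseteq> E \<and> is_tree VT ET \<and> S \<subseteq> VT"

definition rainbow :: "('a set \<Rightarrow> nat) \<Rightarrow> 'a set set \<Rightarrow> bool" where
  "rainbow c ET \<longleftrightarrow> inj_on c ET"

definition three_rainbow_coloring :: "'a set \<Rightarrow> 'a set set \<Rightarrow> ('a set \<Rightarrow> nat) \<Rightarrow> bool" where
  "three_rainbow_coloring V E c \<longleftrightarrow>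
     (\<forall>S. S \<subseteq> V \<and> card S = 3 \<longrightarrow> (\<exists>VT ET. S_tree V E S VT ET \<and> rainbow c ET))"

definition rx3 :: "'a set \<Rightarrow> 'a set set \<Rightarrow> nat" where
  "rx3 V E = (LEAST k. \<exists>c. three_rainbow_coloring V E c \<and> card (c ` E) = k)"

definition K2_V :: "nat \<Rightarrow> (nat + nat) set" where
  "K2_V t = Inl ` {0, 1} \<union> Inr ` {0..<t}"

definition K2_E :: "nat \<Rightarrow> (nat + nat) set set" where
  "K2_E t = {{Inl i, Inr j} | i j. i < 2 \<and> j < t}"

end

theory Submission
  imports Defs
begin


definition hub2 :: "(nat \<Rightarrow> nat) \<Rightarrow> (nat \<Rightarrow> nat) \<Rightarrow> nat \<Rightarrow> nat \<Rightarrow> nat \<Rightarrow> bool" where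
  "hub2 A B k i j \<longleftrightarrow> (\<exists>x\<in>{A i, B i}. \<exists>y\<in>{A j, B j}. distinct [A k, B k, x, y])"

definition hub3 :: "(nat \<Rightarrow> nat) \<Rightarrow> (nat \<Rightarrow> nat) \<Rightarrow> nat \<Rightarrow> nat \<Rightarrow> nat \<Rightarrow> nat \<Rightarrow> bool" where
  "hub3 A B k i j l \<longleftrightarrow> (\<exists>x\<in>{A i, B i}. \<exists>y\<in>{A j, B j}. \<exists>z\<in>{A l, B l}. distinct [A k, B k, x, y, z])"

definition ok3 :: "(nat \<Rightarrow> nat) \<Rightarrow> (nat \<Rightarrow> nat) \<Rightarrow> nat \<Rightarrow> nat \<Rightarrow> nat \<Rightarrow> bool" where
  "ok3 A B i j l \<longleftrightarrow> distinct [A i, A j, A l] \<or> distinct [B i, B j, B l] \<or>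
     hub2 A B i j l \<or> hub2 A B j i l \<or> hub2 A B l i j"


definition okT :: "(nat \<Rightarrow> nat) \<Rightarrow> (nat \<Rightarrow> nat) \<Rightarrow> nat \<Rightarrow> nat \<Rightarrow> nat \<Rightarrow> nat \<Rightarrow> bool" where
  "okT A B n i j l \<longleftrightarrow> ok3 A B i j l \<or> (\<exists>k\<in>set [0..<n]. k \<noteq> i \<and> k \<noteq> j \<and> k \<noteq> l \<and> hub3 A B k i j l)"

definition chk :: "(nat \<times> nat) list \<Rightarrow> bool" where
  "chk L = (let n = length L; A = (\<lambda>j. fst (L!j)); B = (\<lambda>j. snd (L!j)) in
     distinct L \<and> (\<forall>p\<in>set L. fst p \<noteq> snd p) \<and>
     (\<forall>i\<in>set [0..<n]. \<forall>j\<in>set [i+1..<n]. \<forall>l\<in>set [j+1..<n]. okT A B n i j l))"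

definition LL :: "(nat \<times> nat) list" where
 "LL = [(0, 3), (1, 0), (1, 2), (4, 1), (3, 2), (4, 0), (1, 3), (0, 1), (2, 4), (3, 4), (0, 2), (3, 0), (3, 1), (4, 3), (2, 0), (0, 4), (2, 3), (1, 4), (2, 1), (4, 2)]"

lemma upper_comp: "\<forall>t\<in>set [9..<21]. chk (take t LL) \<and> set (map fst (take t LL) @ map snd (take t LL)) = {0..<5}"
  unfolding LL_def by code_simp


lemma F2: "ok3 ((!) [a,a,a]) ((!) [b1,b2,b3]) 0 1 2 \<Longrightarrow> distinct [b1,b2,b3]"
  by (auto simp: ok3_def hub2_def)
lemma F2': "ok3 ((!) [a1,a2,a3]) ((!) [b,b,b]) 0 1 2 \<Longrightarrow> distinct [a1,a2,a3]"
  by (auto simp: ok3_def hub2_def)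

lemma dist5: "distinct [x1,x2,x3,x4,x5::nat] \<Longrightarrow> x1 < 4 \<Longrightarrow> x2 < 4 \<Longrightarrow> x3 < 4 \<Longrightarrow> x4 < 4 \<Longrightarrow> x5 < 4 \<Longrightarrow> False"
proof -
  assume d: "distinct [x1,x2,x3,x4,x5]" and "x1 < 4" "x2 < 4" "x3 < 4" "x4 < 4" "x5 < 4"
  then have "set [x1,x2,x3,x4,x5] \<subseteq> {0..<4}" by auto
  then have "card (set [x1,x2,x3,x4,x5]) \<le> 4" using card_mono[of "{0..<4::nat}"] by fastforce
  moreover have "card (set [x1,x2,x3,x4,x5]) = 5" using d distinct_card by fastforce
  ultimately show False by simp
qed

lemma F3aux: "distinct [b1,b2,b3] \<Longrightarrow> p \<noteq> a \<Longrightarrow> ok3 ((!) [a,a,p]) ((!) [b1,b2,b1]) 0 1 2 \<Longrightarrow>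
   ok3 ((!) [a,a,p]) ((!) [b1,b3,b1]) 0 1 2 \<Longrightarrow> distinct [a,p,b1,b2,b3]"
  by (auto simp: ok3_def hub2_def)


abbreviation eu :: "nat \<Rightarrow> (nat + nat) set" where "eu j \<equiv> {Inl 0, Inr j}"
abbreviation ev :: "nat \<Rightarrow> (nat + nat) set" where "ev j \<equiv> {Inl 1, Inr j}"

lemma walk_nonempty: "walk ET xs \<Longrightarrow> xs \<noteq> []" by (cases xs) auto

lemma walk_snoc: "xs \<noteq> [] \<Longrightarrow> walk ET (xs @ [y]) \<longleftrightarrow> walk ET xs \<and> {last xs, y} \<in> ET"
  by (induction ET xs rule: walk.induct) auto

lemma walk_Cons: "walk ET (x # ys) \<longleftrightarrow> (ys = [] \<or> ({x, hd ys} \<in> ET \<and> walk ET ys))"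
  by (cases ys) auto

lemma set_tl_sub: "set (tl xs) \<subseteq> set xs" by (cases xs) auto

lemma walk_rev: "walk ET xs \<Longrightarrow> walk ET (rev xs)"
proof (induction xs)
  case Nil then show ?case by simp
next
  case (Cons x ys)
  show ?case
  proof (cases "ys = []")
    case True then show ?thesis by simp
  next
    case False
    with Cons.prems have e: "{x, hd ys} \<in> ET" and w: "walk ET ys" by (auto simp: walk_Cons)
    have "walk ET (rev ys)" using Cons.IH w by simp
    moreover have "last (rev ys) = hd ys" using False by (simp add: last_rev)
    moreover have "rev ys \<noteq> []" using False by simp
    ultimately show ?thesis using e walk_snoc[of "rev ys" ET x] by (simp add: insert_commute)
  qed
qed

lemma walk_app: "walk ET xs \<Longrightarrow> walk ET ys \<Longrightarrow> last xs = hd ys \<Longrightarrow> walk ET (xs @ tl ys)"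
proof (induction ET xs rule: walk.induct)
  case (1 ET) then show ?case by simp
next
  case (2 ET x)
  then show ?case by (cases ys) (auto simp: walk_Cons)
next
  case (3 ET x y xs)
  then show ?case by auto
qed

lemma connected_root:
  assumes z: "z \<in> VT"
    and r: "\<And>x. x \<in> VT \<Longrightarrow> \<exists>xs. walk ET xs \<and> set xs \<subseteq> VT \<and> hd xs = x \<and> last xs = z"
  shows "connected_graph VT ET"
  unfolding connected_graph_def
proof (intro ballI)
  fix u v assume u: "u \<in> VT" and v: "v \<in> VT"
  obtain p where p: "walk ET p" "set p \<subseteq> VT" "hd p = u" "last p = z" using r[OF u] by blast
  obtain q where q: "walk ET q" "set q \<subseteq> VT" "hd q = v" "last q = z" using r[OF v] by blast
  have pn: "p \<noteq> []" and qn: "q \<noteq> []" using p q walk_nonempty by auto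
  have w: "walk ET (p @ tl (rev q))"
    by (rule walk_app) (use p q qn walk_rev in \<open>auto simp: hd_rev\<close>)
  have s: "set (p @ tl (rev q)) \<subseteq> VT" using p q set_tl_sub[of "rev q"] by auto
  have h: "hd (p @ tl (rev q)) = u" using pn p by simp
  have l: "last (p @ tl (rev q)) = v"
  proof (cases "tl (rev q) = []")
    case True
    then have "rev q = [hd (rev q)]" using qn by (cases "rev q") auto
    then have "q = [z]" using q qn by (metis hd_rev rev_singleton_conv)
    then show ?thesis using True p q by simp
  next
    case False
    then have "last (tl (rev q)) = last (rev q)" by (metis last_tl)
    then show ?thesis using False q qn by (simp add: last_rev)
  qed
  show "\<exists>xs. walk ET xs \<and> set xs \<subseteq> VT \<and> hd xs = u \<and> last xs = v"
    using w s h l by blast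
qed

lemma K2_E_iff: "e \<in> K2_E t \<longleftrightarrow> (\<exists>i j. e = {Inl i, Inr j} \<and> i < 2 \<and> j < t)"
  unfolding K2_E_def by blast

lemma eu_in[simp]: "j < t \<Longrightarrow> eu j \<in> K2_E t"
  unfolding K2_E_iff by (intro exI[of _ 0] exI[of _ j]) simp
lemma ev_in[simp]: "j < t \<Longrightarrow> ev j \<in> K2_E t"
  unfolding K2_E_iff by (intro exI[of _ 1] exI[of _ j]) simp

lemma ev_in'[simp]: "j < t \<Longrightarrow> {Inl (Suc 0), Inr j} \<in> K2_E t"
  using ev_in by simp

lemma edge_cases:
  assumes "{x, y} \<in> K2_E t"
  shows "\<exists>a p. a < 2 \<and> p < t \<and> ((x = Inl a \<and> y = Inr p) \<or> (x = Inr p \<and> y = Inl a))"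
  using assms unfolding K2_E_iff by (auto simp: doubleton_eq_iff)


lemma no_cycle:
  assumes sub: "ET \<subseteq> K2_E t"
    and NB: "\<And>p q. eu p \<in> ET \<Longrightarrow> ev p \<in> ET \<Longrightarrow> eu q \<in> ET \<Longrightarrow> ev q \<in> ET \<Longrightarrow> p = q"
  shows "\<not> has_cycle ET"
proof
  assume "has_cycle ET"
  then obtain xs where len: "length xs \<ge> 3" and d: "distinct xs" and w: "walk ET xs"
    and cl: "{last xs, hd xs} \<in> ET" unfolding has_cycle_def by blast
  obtain x0 x1 x2 r where xs: "xs = x0 # x1 # x2 # r"
    using len by (cases xs; cases "tl xs"; cases "tl (tl xs)") auto
  have E: "\<And>x y. {x,y} \<in> ET \<Longrightarrow> \<exists>a p. a < 2 \<and> p < t \<and> ((x = Inl a \<and> y = Inr p) \<or> (x = Inr p \<and> y = Inl a))"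
    using sub edge_cases by blast
  have e01: "{x0,x1} \<in> ET" and e12: "{x1,x2} \<in> ET" and wr: "walk ET (x2 # r)" using w xs by auto
  have lt2: "\<And>a::nat. a < 2 \<Longrightarrow> a = 0 \<or> a = 1" by auto
  show False
  proof (cases x0)
    case (Inl a)
    obtain p where x1: "x1 = Inr p" using E[OF e01] Inl by auto
    obtain b where x2: "x2 = Inl b" "b < 2" using E[OF e12] x1 by auto
    have a2: "a < 2" using E[OF e01] Inl by auto
    have ab: "a \<noteq> b" using d xs Inl x2 by auto
    have pboth: "eu p \<in> ET \<and> ev p \<in> ET"
      using e01 e12 Inl x1 x2 ab lt2[OF a2] lt2[OF x2(2)] by (auto simp: insert_commute)
    show False
    proof (cases r)
      case Nil
      then show False using cl xs Inl x2 E by fastforce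
    next
      case (Cons x3 r')
      have e23: "{x2,x3} \<in> ET" using wr Cons by auto
      obtain q where x3: "x3 = Inr q" using E[OF e23] x2 by auto
      have pq: "p \<noteq> q" using d xs x1 x3 Cons by auto
      show False
      proof (cases r')
        case Nil
        have "{x3, x0} \<in> ET" using cl xs Cons Nil by simp
        then have "eu q \<in> ET \<and> ev q \<in> ET"
          using e23 Inl x2 x3 ab lt2[OF a2] lt2[OF x2(2)] by (auto simp: insert_commute)
        then show False using NB pboth pq by blast
      next
        case (Cons x4 r'')
        have "{x3,x4} \<in> ET" using wr \<open>r = x3 # r'\<close> Cons by auto
        then obtain c where x4: "x4 = Inl c" "c < 2" using E x3 by fastforce
        have "c \<noteq> a" "c \<noteq> b" using d xs \<open>r = x3 # r'\<close> Cons Inl x2 x4 by auto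
        then show False using x2 a2 x4 ab lt2 by metis
      qed
    qed
  next
    case (Inr p)
    obtain a where x1: "x1 = Inl a" "a < 2" using E[OF e01] Inr by auto
    obtain q where x2: "x2 = Inr q" using E[OF e12] x1 by auto
    show False
    proof (cases r)
      case Nil
      then show False using cl xs Inr x2 E by fastforce
    next
      case (Cons x3 r')
      have e23: "{x2,x3} \<in> ET" using wr Cons by auto
      obtain b where x3: "x3 = Inl b" "b < 2" using E[OF e23] x2 by auto
      have ab: "a \<noteq> b" using d xs x1 x3 Cons by auto
      have pq: "p \<noteq> q" using d xs Inr x2 by auto
      have qboth: "eu q \<in> ET \<and> ev q \<in> ET"
        using e12 e23 x1 x2 x3 ab lt2[OF x1(2)] lt2[OF x3(2)] by (auto simp: insert_commute)
      show False
      proof (cases r')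
        case Nil
        have "{x3, x0} \<in> ET" using cl xs Cons Nil by simp
        then have "eu p \<in> ET \<and> ev p \<in> ET"
          using e01 Inr x1 x3 ab lt2[OF x1(2)] lt2[OF x3(2)] by (auto simp: insert_commute)
        then show False using NB qboth pq by blast
      next
        case (Cons x4 r'')
        have wr3: "walk ET (x3 # x4 # r'')" using wr \<open>r = x3 # r'\<close> Cons by auto
        have "{x3,x4} \<in> ET" using wr3 by auto
        then obtain s where x4: "x4 = Inr s" using E x3 by fastforce
        show False
        proof (cases r'')
          case Nil
          have "{x4, x0} \<in> ET" using cl xs \<open>r = x3 # r'\<close> \<open>r' = x4 # r''\<close> Nil by simp
          then show False using E Inr x4 by fastforce
        next
          case (Cons x5 r3)
          have "{x4,x5} \<in> ET" using wr3 Cons by auto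
          then obtain c where x5: "x5 = Inl c" "c < 2" using E x4 by fastforce
          have "c \<noteq> a" "c \<noteq> b" using d xs \<open>r = x3 # r'\<close> \<open>r' = x4 # r''\<close> Cons x1 x3 x5 by auto
          then show False using x1 x3 x5 ab lt2 by metis
        qed
      qed
    qed
  qed
qed


definition hubV :: "nat \<Rightarrow> nat set \<Rightarrow> (nat + nat) set" where
  "hubV k I = insert (Inl 0) (insert (Inl 1) (insert (Inr k) (Inr ` I)))"
definition hubE :: "nat \<Rightarrow> nat set \<Rightarrow> (nat \<Rightarrow> bool) \<Rightarrow> (nat + nat) set set" where
  "hubE k I g = insert (eu k) (insert (ev k) ((\<lambda>i. if g i then eu i else ev i) ` I))"

lemma hub_tree:
  assumes k: "k < t" and I: "I \<subseteq> {..<t}" and kI: "k \<notin> I"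
  shows "hubV k I \<subseteq> K2_V t" "hubE k I g \<subseteq> K2_E t" "is_tree (hubV k I) (hubE k I g)"
proof -
  show "hubV k I \<subseteq> K2_V t" using k I by (auto simp: hubV_def K2_V_def)
  show sub: "hubE k I g \<subseteq> K2_E t" using k I by (auto simp: hubE_def)
  have conn: "connected_graph (hubV k I) (hubE k I g)"
  proof (rule connected_root[of "Inl 0"])
    show "Inl 0 \<in> hubV k I" by (simp add: hubV_def)
  next
    fix x assume "x \<in> hubV k I"
    then consider "x = Inl 0" | "x = Inl 1" | "x = Inr k" | i where "i \<in> I" "x = Inr i"
      unfolding hubV_def by blast
    then show "\<exists>xs. walk (hubE k I g) xs \<and> set xs \<subseteq> hubV k I \<and> hd xs = x \<and> last xs = Inl 0"
    proof cases
      case 1 then show ?thesis by (intro exI[of _ "[Inl 0]"]) (simp add: hubV_def)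
    next
      case 2 then show ?thesis
        by (intro exI[of _ "[Inl 1, Inr k, Inl 0]"]) (auto simp: hubV_def hubE_def insert_commute)
    next
      case 3 then show ?thesis
        by (intro exI[of _ "[Inr k, Inl 0]"]) (auto simp: hubV_def hubE_def insert_commute)
    next
      case 4
      show ?thesis
      proof (cases "g i")
        case True
        then show ?thesis using 4
          by (intro exI[of _ "[Inr i, Inl 0]"]) (auto simp: hubV_def hubE_def insert_commute)
      next
        case False
        then have "ev i \<in> hubE k I g" using 4 by (force simp: hubE_def)
        then show ?thesis using 4
          by (intro exI[of _ "[Inr i, Inl 1, Inr k, Inl 0]"]) (auto simp: hubV_def hubE_def insert_commute)
      qed
    qed
  qed
  have nb: "p = k" if "eu p \<in> hubE k I g" "ev p \<in> hubE k I g" for p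
  proof (rule ccontr)
    assume pk: "p \<noteq> k"
    from that(1) pk obtain i where i: "i \<in> I" "eu p = (if g i then eu i else ev i)"
      by (auto simp: hubE_def doubleton_eq_iff)
    from that(2) pk obtain i' where i': "i' \<in> I" "ev p = (if g i' then eu i' else ev i')"
      by (auto simp: hubE_def doubleton_eq_iff)
    from i have "g i" "i = p" by (auto split: if_splits simp: doubleton_eq_iff)
    moreover from i' have "\<not> g i'" "i' = p" by (auto split: if_splits simp: doubleton_eq_iff)
    ultimately show False by simp
  qed
  have "\<not> has_cycle (hubE k I g)"
    by (rule no_cycle[OF sub]) (metis nb)
  moreover have "\<forall>e\<in>hubE k I g. e \<subseteq> hubV k I" by (auto simp: hubE_def hubV_def)
  ultimately show "is_tree (hubV k I) (hubE k I g)"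
    using conn by (auto simp: is_tree_def hubV_def)
qed

definition starV :: "nat \<Rightarrow> nat set \<Rightarrow> (nat + nat) set" where
  "starV a I = insert (Inl a) (Inr ` I)"
definition starE :: "nat \<Rightarrow> nat set \<Rightarrow> (nat + nat) set set" where
  "starE a I = (\<lambda>i. {Inl a, Inr i}) ` I"

lemma star_tree:
  assumes a: "a < 2" and I: "I \<subseteq> {..<t}"
  shows "starV a I \<subseteq> K2_V t" "starE a I \<subseteq> K2_E t" "is_tree (starV a I) (starE a I)"
proof -
  have a01: "a = 0 \<or> a = 1" using a by auto
  show "starV a I \<subseteq> K2_V t" using a01 I by (auto simp: starV_def K2_V_def)
  show sub: "starE a I \<subseteq> K2_E t" using a01 I by (auto simp: starE_def)
  have conn: "connected_graph (starV a I) (starE a I)"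
  proof (rule connected_root[of "Inl a"])
    show "Inl a \<in> starV a I" by (simp add: starV_def)
  next
    fix x assume "x \<in> starV a I"
    then consider "x = Inl a" | i where "i \<in> I" "x = Inr i"
      unfolding starV_def by blast
    then show "\<exists>xs. walk (starE a I) xs \<and> set xs \<subseteq> starV a I \<and> hd xs = x \<and> last xs = Inl a"
    proof cases
      case 1 then show ?thesis by (intro exI[of _ "[Inl a]"]) (simp add: starV_def)
    next
      case 2 then show ?thesis
        by (intro exI[of _ "[Inr i, Inl a]"]) (auto simp: starV_def starE_def insert_commute)
    qed
  qed
  have nb: False if "eu p \<in> starE a I" "ev p \<in> starE a I" for p
    using that by (auto simp: starE_def doubleton_eq_iff)
  have "\<not> has_cycle (starE a I)"
    by (rule no_cycle[OF sub]) (metis nb)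
  moreover have "\<forall>e\<in>starE a I. e \<subseteq> starV a I" by (auto simp: starE_def starV_def)
  ultimately show "is_tree (starV a I) (starE a I)"
    using conn by (auto simp: is_tree_def starV_def)
qed


definition Gd :: "nat \<Rightarrow> ((nat + nat) set \<Rightarrow> nat) \<Rightarrow> (nat + nat) set \<Rightarrow> bool" where
  "Gd t col S \<longleftrightarrow> (\<exists>VT ET. S_tree (K2_V t) (K2_E t) S VT ET \<and> rainbow col ET)"

lemma hubE_set: "hubE k (set xs) g = set (eu k # ev k # map (\<lambda>i. if g i then eu i else ev i) xs)"
  by (simp add: hubE_def)

lemma starE_set: "starE a (set xs) = set (map (\<lambda>i. {Inl a, Inr i}) xs)"
  by (simp add: starE_def)

lemma inj_from_distinct: "distinct (map f xs) \<Longrightarrow> inj_on f (set xs)"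
  by (simp add: distinct_map)

locale colK2 =
  fixes t :: nat and col :: "(nat + nat) set \<Rightarrow> nat" and A B :: "nat \<Rightarrow> nat"
  assumes CA: "\<And>j. j < t \<Longrightarrow> col (eu j) = A j"
    and CB: "\<And>j. j < t \<Longrightarrow> col (ev j) = B j"
begin

lemma hub_Gd:
  assumes k: "k < t" and I: "set xs \<subseteq> {..<t}" and kI: "k \<notin> set xs"
    and d: "distinct (A k # B k # map (\<lambda>i. if g i then A i else B i) xs)"
    and S: "S \<subseteq> hubV k (set xs)"
  shows "Gd t col S"
proof -
  have m: "map col (eu k # ev k # map (\<lambda>i. if g i then eu i else ev i) xs)
      = A k # B k # map (\<lambda>i. if g i then A i else B i) xs"
    using k I CA CB by (auto simp: CA CB)
  have "rainbow col (hubE k (set xs) g)"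
    unfolding rainbow_def hubE_set by (rule inj_from_distinct) (simp only: m d)
  then show ?thesis unfolding Gd_def S_tree_def
    by (intro exI[of _ "hubV k (set xs)"] exI[of _ "hubE k (set xs) g"])
      (simp add: hub_tree[OF k I kI] S)
qed

lemma star_Gd:
  assumes a: "a < 2" and I: "set xs \<subseteq> {..<t}"
    and d: "distinct (map (if a = 0 then A else B) xs)"
    and S: "S \<subseteq> starV a (set xs)"
  shows "Gd t col S"
proof -
  have a01: "a = 0 \<or> a = 1" using a by auto
  have m: "map col (map (\<lambda>i. {Inl a, Inr i}) xs) = map (if a = 0 then A else B) xs"
    using a01 I CA CB by auto
  have "rainbow col (starE a (set xs))"
    unfolding rainbow_def starE_set by (rule inj_from_distinct) (simp only: m d)
  then show ?thesis unfolding Gd_def S_tree_def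
    by (intro exI[of _ "starV a (set xs)"] exI[of _ "starE a (set xs)"])
      (simp add: star_tree[OF a I] S)
qed

lemma G1: "j < t \<Longrightarrow> A j \<noteq> B j \<Longrightarrow> Gd t col {Inl 0, Inl 1, Inr j}"
  by (rule hub_Gd[where xs="[]"]) (auto simp: hubV_def)

lemma pickc: "x \<in> {A p, B p} \<Longrightarrow> (if x = A p then A p else B p) = x" by auto

lemma hub_pick2:
  assumes "k < t" "p < t" "q < t" "k \<noteq> p" "k \<noteq> q" "p \<noteq> q"
    and x: "x \<in> {A p, B p}" and y: "y \<in> {A q, B q}" and d: "distinct [A k, B k, x, y]"
    and S: "S \<subseteq> hubV k {p, q}"
  shows "Gd t col S"
proof -
  let ?g = "\<lambda>m. if m = p then x = A p else y = A q"
  have "map (\<lambda>i. if ?g i then A i else B i) [p, q] = [x, y]"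
    using assms(6) pickc[OF x] pickc[OF y] by simp
  then show ?thesis
    using assms by (intro hub_Gd[where xs="[p,q]" and g="?g"]) auto
qed

lemma hub_pick3:
  assumes "k < t" "p < t" "q < t" "r < t" "k \<noteq> p" "k \<noteq> q" "k \<noteq> r" "p \<noteq> q" "p \<noteq> r" "q \<noteq> r"
    and x: "x \<in> {A p, B p}" and y: "y \<in> {A q, B q}" and z: "z \<in> {A r, B r}"
    and d: "distinct [A k, B k, x, y, z]"
    and S: "S \<subseteq> hubV k {p, q, r}"
  shows "Gd t col S"
proof -
  let ?g = "\<lambda>m. if m = p then x = A p else if m = q then y = A q else z = A r"
  have "map (\<lambda>i. if ?g i then A i else B i) [p, q, r] = [x, y, z]"
    using assms(8-10) pickc[OF x] pickc[OF y] pickc[OF z] by simp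
  then show ?thesis
    using assms by (intro hub_Gd[where xs="[p,q,r]" and g="?g"]) auto
qed

lemma G2:
  assumes a: "a < 2" and ij: "i < t" "j < t" "i \<noteq> j"
    and H1: "A i \<noteq> B i" "A j \<noteq> B j" and H2: "A i = A j \<Longrightarrow> B i \<noteq> B j"
  shows "Gd t col {Inl a, Inr i, Inr j}"
proof -
  have a01: "a = 0 \<or> a = 1" using a by auto
  have S: "{Inl a, Inr i, Inr j} \<subseteq> hubV i (set [j])" using a01 by (auto simp: hubV_def)
  show ?thesis
  proof (cases "a = 0")
    case True
    show ?thesis
    proof (cases "A i = A j")
      case False
      then show ?thesis using True ij by (intro star_Gd[where xs="[i,j]"]) (auto simp: starV_def)
    next
      case eq: True
      then show ?thesis using ij H1 H2 S by (intro hub_Gd[where xs="[j]" and g="\<lambda>_. False"]) auto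
    qed
  next
    case False
    then have a1: "a = 1" using a01 by simp
    show ?thesis
    proof (cases "B i = B j")
      case False
      then show ?thesis using a1 ij by (intro star_Gd[where xs="[i,j]"]) (auto simp: starV_def)
    next
      case eq: True
      then show ?thesis using ij H1 H2 S by (intro hub_Gd[where xs="[j]" and g="\<lambda>_. True"]) auto
    qed
  qed
qed

lemma G3:
  assumes ijl: "i < t" "j < t" "l < t" "i \<noteq> j" "i \<noteq> l" "j \<noteq> l"
    and ok: "okT A B t i j l"
  shows "Gd t col {Inr i, Inr j, Inr l}"
proof -
  have S1: "{Inr i, Inr j, Inr l} \<subseteq> hubV i {j, l}" "{Inr i, Inr j, Inr l} \<subseteq> hubV j {i, l}"
    "{Inr i, Inr j, Inr l} \<subseteq> hubV l {i, j}" by (auto simp: hubV_def)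
  have S3: "\<And>k. {Inr i, Inr j, Inr l} \<subseteq> hubV k {i, j, l}" by (auto simp: hubV_def)
  from ok consider "distinct [A i, A j, A l]" | "distinct [B i, B j, B l]"
    | "hub2 A B i j l" | "hub2 A B j i l" | "hub2 A B l i j"
    | k where "k < t" "k \<noteq> i" "k \<noteq> j" "k \<noteq> l" "hub3 A B k i j l"
    unfolding okT_def ok3_def by auto
  then show ?thesis
  proof cases
    case 1 then show ?thesis using ijl by (intro star_Gd[where xs="[i,j,l]" and a=0]) (auto simp: starV_def)
  next
    case 2 then show ?thesis using ijl by (intro star_Gd[where xs="[i,j,l]" and a=1]) (auto simp: starV_def)
  next
    case 3 then obtain x y where "x \<in> {A j, B j}" "y \<in> {A l, B l}" "distinct [A i, B i, x, y]"
      unfolding hub2_def by blast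
    then show ?thesis using ijl S1 by (intro hub_pick2[where k=i and p=j and q=l and x=x and y=y]) auto
  next
    case 4 then obtain x y where "x \<in> {A i, B i}" "y \<in> {A l, B l}" "distinct [A j, B j, x, y]"
      unfolding hub2_def by blast
    then show ?thesis using ijl S1 by (intro hub_pick2[where k=j and p=i and q=l and x=x and y=y]) auto
  next
    case 5 then obtain x y where "x \<in> {A i, B i}" "y \<in> {A j, B j}" "distinct [A l, B l, x, y]"
      unfolding hub2_def by blast
    then show ?thesis using ijl S1 by (intro hub_pick2[where k=l and p=i and q=j and x=x and y=y]) auto
  next
    case 6 then obtain x y z where "x \<in> {A i, B i}" "y \<in> {A j, B j}" "z \<in> {A l, B l}"
      "distinct [A k, B k, x, y, z]"
      unfolding hub3_def by blast
    then show ?thesis using ijl 6 S3 by (intro hub_pick3[where k=k and p=i and q=j and r=l and x=x and y=y and z=z]) auto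
  qed
qed

lemma K2_V_cases: "x \<in> K2_V t \<Longrightarrow> x = Inl 0 \<or> x = Inl 1 \<or> (\<exists>j<t. x = Inr j)"
  by (auto simp: K2_V_def)

lemma sound:
  assumes H1: "\<forall>j<t. A j \<noteq> B j"
    and H2: "\<forall>i<t. \<forall>j<t. i \<noteq> j \<longrightarrow> A i = A j \<longrightarrow> B i \<noteq> B j"
    and H3: "\<forall>i j l. i < t \<longrightarrow> j < t \<longrightarrow> l < t \<longrightarrow> i \<noteq> j \<longrightarrow> i \<noteq> l \<longrightarrow> j \<noteq> l \<longrightarrow> okT A B t i j l"
  shows "three_rainbow_coloring (K2_V t) (K2_E t) col"
  unfolding three_rainbow_coloring_def
proof (intro allI impI, elim conjE)
  fix S assume SV: "S \<subseteq> K2_V t" and c3: "card S = 3"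
  obtain x y z where S: "S = {x,y,z}" and d: "x \<noteq> y" "y \<noteq> z" "x \<noteq> z"
    using c3 card_3_iff by metis
  have GA: "\<And>p. p < t \<Longrightarrow> Gd t col {Inl 0, Inl 1, Inr p}" using G1 H1 by auto
  have GB: "\<And>a p q. a < 2 \<Longrightarrow> p < t \<Longrightarrow> q < t \<Longrightarrow> p \<noteq> q \<Longrightarrow> Gd t col {Inl a, Inr p, Inr q}"
    using G2 H1 H2 by metis
  have GC: "\<And>p q r. p < t \<Longrightarrow> q < t \<Longrightarrow> r < t \<Longrightarrow> p \<noteq> q \<Longrightarrow> p \<noteq> r \<Longrightarrow> q \<noteq> r
     \<Longrightarrow> Gd t col {Inr p, Inr q, Inr r}"
    using G3 H3 by metis
  have GB0: "\<And>p q. p < t \<Longrightarrow> q < t \<Longrightarrow> p \<noteq> q \<Longrightarrow> Gd t col {Inl 0, Inr p, Inr q}"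
    using GB[of 0] by simp
  have GB1: "\<And>p q. p < t \<Longrightarrow> q < t \<Longrightarrow> p \<noteq> q \<Longrightarrow> Gd t col {Inl 1, Inr p, Inr q}"
    using GB[of 1] by simp
  have GA': "\<And>p. p < t \<Longrightarrow> Gd t col {Inl 0, Inr p, Inl (Suc 0)}"
    using GA by (simp add: insert_commute)
  have GB1': "\<And>p q. p < t \<Longrightarrow> q < t \<Longrightarrow> p \<noteq> q \<Longrightarrow> Gd t col {Inr p, Inr q, Inl (Suc 0)}"
    using GB1 by (simp add: insert_commute)
  have xV: "x = Inl 0 \<or> x = Inl 1 \<or> (\<exists>j<t. x = Inr j)" using SV S K2_V_cases by blast
  have yV: "y = Inl 0 \<or> y = Inl 1 \<or> (\<exists>j<t. y = Inr j)" using SV S K2_V_cases by blast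
  have zV: "z = Inl 0 \<or> z = Inl 1 \<or> (\<exists>j<t. z = Inr j)" using SV S K2_V_cases by blast
  have "Gd t col {x,y,z}"
    using xV yV zV d
    apply (elim disjE exE conjE)
    apply (simp_all only:)
    apply (simp_all add: insert_commute GA GB0 GB1 GC GA' GB1')
    done
  then show "\<exists>VT ET. S_tree (K2_V t) (K2_E t) S VT ET \<and> rainbow col ET"
    using S unfolding Gd_def by simp
qed

end


lemma walk_uv:
  "walk ET xs \<Longrightarrow> ET \<subseteq> K2_E t \<Longrightarrow> hd xs = Inl 0 \<Longrightarrow> last xs = Inl 1 \<Longrightarrow> \<exists>k<t. eu k \<in> ET \<and> ev k \<in> ET"
proof (induction "length xs" arbitrary: xs rule: less_induct)
  case less
  have E: "\<And>x y. {x,y} \<in> ET \<Longrightarrow> \<exists>a p. a < 2 \<and> p < t \<and> ((x = Inl a \<and> y = Inr p) \<or> (x = Inr p \<and> y = Inl a))"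
    using less.prems(2) edge_cases by blast
  obtain r where xs: "xs = Inl 0 # r" using less.prems(1,3) by (cases xs) auto
  have "r \<noteq> []" using xs less.prems(4) by auto
  then obtain y r2 where r: "r = y # r2" by (cases r) auto
  have e1: "{Inl 0, y} \<in> ET" using less.prems(1) xs r by simp
  obtain p where y: "y = Inr p" "p < t" using E[OF e1] by auto
  have "r2 \<noteq> []" using xs r y less.prems(4) by auto
  then obtain z r3 where r2: "r2 = z # r3" by (cases r2) auto
  have e2: "{y, z} \<in> ET" using less.prems(1) xs r r2 by simp
  obtain b where z: "z = Inl b" "b < 2" using E[OF e2] y by auto
  show ?case
  proof (cases "b = 0")
    case True
    have w: "walk ET (z # r3)" using less.prems(1) xs r r2 by simp
    have "last (z # r3) = Inl 1" using less.prems(4) xs r r2 by simp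
    moreover have "length (z # r3) < length xs" using xs r r2 by simp
    moreover have "hd (z # r3) = Inl 0" using z True by simp
    ultimately show ?thesis using less.hyps[of "z # r3"] w less.prems(2) by blast
  next
    case False
    then have "b = 1" using z by auto
    then show ?thesis using e1 e2 y z by (auto simp: insert_commute)
  qed
qed

lemma edge_at:
  assumes tr: "is_tree VT ET" and sub: "ET \<subseteq> K2_E t" and i: "Inr i \<in> VT" and y: "y \<in> VT" "y \<noteq> Inr i"
  shows "\<exists>a<2. {Inl a, Inr i} \<in> ET"
proof -
  obtain xs where w: "walk ET xs" "hd xs = Inr i" "last xs = y"
    using tr i y unfolding is_tree_def connected_graph_def by blast
  obtain r where xs: "xs = Inr i # r" using w by (cases xs) auto
  have "r \<noteq> []" using xs w y by auto
  then obtain z r2 where r: "r = z # r2" by (cases r) auto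
  have ez: "{Inr i, z} \<in> ET" using w xs r by simp
  then have "{Inr i, z} \<in> K2_E t" using sub by blast
  from edge_cases[OF this] obtain a p where a: "a < 2"
    and "(Inr i = Inl a \<and> z = Inr p) \<or> (Inr i = Inr p \<and> z = Inl a)" by blast
  then have "z = Inl a" by auto
  then show ?thesis using ez a by (auto simp: insert_commute)
qed

lemma dmap: "inj_on f ET \<Longrightarrow> set es \<subseteq> ET \<Longrightarrow> distinct es \<Longrightarrow> distinct (map f es)"
  by (simp add: distinct_map inj_on_subset)

context colK2
begin

lemma extract3:
  assumes st: "S_tree (K2_V t) (K2_E t) S VT ET" and rb: "rainbow col ET"
    and ins: "Inr i \<in> S" "Inr j \<in> S" "Inr l \<in> S" and d: "i \<noteq> j" "i \<noteq> l" "j \<noteq> l"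
  shows "ok3 A B i j l \<or> (\<exists>k<t. hub3 A B k i j l)"
proof -
  have SV: "S \<subseteq> K2_V t" "S \<subseteq> VT" and sub: "ET \<subseteq> K2_E t" and tr: "is_tree VT ET"
    using st unfolding S_tree_def by auto
  have inj: "inj_on col ET" using rb unfolding rainbow_def .
  have lt: "i < t" "j < t" "l < t" using SV ins by (auto simp: K2_V_def)
  have EV: "\<And>e. e \<in> ET \<Longrightarrow> e \<subseteq> VT" using tr unfolding is_tree_def by auto
  obtain ai where ai: "ai < 2" "{Inl ai, Inr i} \<in> ET" using edge_at[OF tr sub, of i "Inr j"] ins SV d by auto
  obtain aj where aj: "aj < 2" "{Inl aj, Inr j} \<in> ET" using edge_at[OF tr sub, of j "Inr i"] ins SV d by auto
  obtain al where al: "al < 2" "{Inl al, Inr l} \<in> ET" using edge_at[OF tr sub, of l "Inr i"] ins SV d by auto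
  define ci where "ci = col {Inl ai, Inr i}"
  define cj where "cj = col {Inl aj, Inr j}"
  define cl where "cl = col {Inl al, Inr l}"
  have cc: "\<And>a p. a < 2 \<Longrightarrow> p < t \<Longrightarrow> col {Inl a, Inr p} \<in> {A p, B p}"
  proof -
    fix a p assume "a < (2::nat)" "p < t"
    then have "a = 0 \<or> a = 1" by auto
    then show "col {Inl a, Inr p} \<in> {A p, B p}" using CA[OF \<open>p < t\<close>] CB[OF \<open>p < t\<close>] by auto
  qed
  have ci: "ci \<in> {A i, B i}" "cj \<in> {A j, B j}" "cl \<in> {A l, B l}"
    unfolding ci_def cj_def cl_def using cc ai aj al lt by auto
  have de3: "distinct [{Inl ai, Inr i}, {Inl aj, Inr j}, {Inl al, Inr l}]" using d by (simp add: doubleton_eq_iff)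
  have se3: "set [{Inl ai, Inr i}, {Inl aj, Inr j}, {Inl al, Inr l}] \<subseteq> ET" using ai aj al by simp
  have d3: "distinct [ci, cj, cl]"
    using dmap[OF inj se3 de3] ci_def cj_def cl_def by simp
  show ?thesis
  proof (cases "ai = aj \<and> aj = al")
    case True
    then have "ai = 0 \<or> ai = 1" using ai by auto
    then show ?thesis
    proof
      assume "ai = 0"
      then have "ci = A i" "cj = A j" "cl = A l" using True CA lt unfolding ci_def cj_def cl_def by auto
      then show ?thesis using d3 unfolding ok3_def by simp
    next
      assume "ai = 1"
      then have "ci = B i" "cj = B j" "cl = B l" using True CB lt unfolding ci_def cj_def cl_def by auto
      then show ?thesis using d3 unfolding ok3_def by simp
    qed
  next
    case False
    have v: "Inl ai \<in> VT" "Inl aj \<in> VT" "Inl al \<in> VT"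
      using EV[OF ai(2)] EV[OF aj(2)] EV[OF al(2)] by auto
    have "(ai = 0 \<or> aj = 0 \<or> al = 0) \<and> (ai = 1 \<or> aj = 1 \<or> al = 1)"
      using False ai(1) aj(1) al(1) by linarith
    then have "Inl 0 \<in> VT \<and> Inl 1 \<in> VT" using v by auto
    then obtain xs where w: "walk ET xs" "hd xs = Inl 0" "last xs = Inl 1"
      using tr unfolding is_tree_def connected_graph_def by blast
    obtain k where k: "k < t" "eu k \<in> ET" "ev k \<in> ET" using walk_uv[OF w(1) sub w(2,3)] by blast
    have Ak: "col (eu k) = A k" "col (ev k) = B k" using CA CB k by auto
    consider "k = i" | "k = j" | "k = l" | "k \<noteq> i \<and> k \<noteq> j \<and> k \<noteq> l" by blast
    then show ?thesis
    proof cases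
      case 1
      have de: "distinct [eu k, ev k, {Inl aj, Inr j}, {Inl al, Inr l}]" using aj al d k 1 by (simp add: doubleton_eq_iff)
      have se: "set [eu k, ev k, {Inl aj, Inr j}, {Inl al, Inr l}] \<subseteq> ET" using aj al d k 1 by simp
      have "distinct [A k, B k, cj, cl]"
        using dmap[OF inj se de] Ak[symmetric] cj_def cl_def by simp
      then have "hub2 A B i j l" unfolding hub2_def using ci 1 by blast
      then show ?thesis unfolding ok3_def by simp
    next
      case 2
      have de: "distinct [eu k, ev k, {Inl ai, Inr i}, {Inl al, Inr l}]" using ai al d k 2 by (simp add: doubleton_eq_iff)
      have se: "set [eu k, ev k, {Inl ai, Inr i}, {Inl al, Inr l}] \<subseteq> ET" using ai al d k 2 by simp
      have "distinct [A k, B k, ci, cl]"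
        using dmap[OF inj se de] Ak[symmetric] ci_def cl_def by simp
      then have "hub2 A B j i l" unfolding hub2_def using ci 2 by blast
      then show ?thesis unfolding ok3_def by simp
    next
      case 3
      have de: "distinct [eu k, ev k, {Inl ai, Inr i}, {Inl aj, Inr j}]" using ai aj d k 3 by (simp add: doubleton_eq_iff)
      have se: "set [eu k, ev k, {Inl ai, Inr i}, {Inl aj, Inr j}] \<subseteq> ET" using ai aj d k 3 by simp
      have "distinct [A k, B k, ci, cj]"
        using dmap[OF inj se de] Ak[symmetric] ci_def cj_def by simp
      then have "hub2 A B l i j" unfolding hub2_def using ci 3 by blast
      then show ?thesis unfolding ok3_def by simp
    next
      case 4
      have de: "distinct [eu k, ev k, {Inl ai, Inr i}, {Inl aj, Inr j}, {Inl al, Inr l}]" using ai aj al d k 4 by (simp add: doubleton_eq_iff)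
      have se: "set [eu k, ev k, {Inl ai, Inr i}, {Inl aj, Inr j}, {Inl al, Inr l}] \<subseteq> ET" using ai aj al d k 4 by simp
      have "distinct [A k, B k, ci, cj, cl]"
        using dmap[OF inj se de] Ak[symmetric] ci_def cj_def cl_def by simp
      then have "hub3 A B k i j l" unfolding hub3_def using ci by blast
      then show ?thesis using k(1) by blast
    qed
  qed
qed

end


lemma three_in:
  assumes "3 \<le> card X"
  obtains i j l where "i \<in> X" "j \<in> X" "l \<in> X" "i \<noteq> j" "i \<noteq> l" "j \<noteq> l"
proof -
  obtain T where T: "T \<subseteq> X" "card T = 3" using obtain_subset_with_card_n[OF assms] by blast
  then obtain x y z where "T = {x,y,z}" "x \<noteq> y" "y \<noteq> z" "x \<noteq> z" using card_3_iff by metis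
  then show ?thesis using that T by blast
qed

lemma tri:
  assumes "ok3 A B i j l \<or> (\<exists>k. hub3 A B k i j l)"
  shows "\<exists>x\<in>{A i, B i}. \<exists>y\<in>{A j, B j}. \<exists>z\<in>{A l, B l}. distinct [x, y, z]"
proof -
  from assms consider "distinct [A i, A j, A l]" | "distinct [B i, B j, B l]"
    | "hub2 A B i j l" | "hub2 A B j i l" | "hub2 A B l i j" | k where "hub3 A B k i j l"
    unfolding ok3_def by blast
  then show ?thesis
  proof cases
    case 1 then show ?thesis by blast
  next
    case 2 then show ?thesis by blast
  next
    case 3 then obtain y z where "y \<in> {A j, B j}" "z \<in> {A l, B l}" "distinct [A i, B i, y, z]"
      unfolding hub2_def by blast
    then show ?thesis by (intro bexI[of _ "A i"] bexI[of _ y] bexI[of _ z]) auto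
  next
    case 4 then obtain x z where "x \<in> {A i, B i}" "z \<in> {A l, B l}" "distinct [A j, B j, x, z]"
      unfolding hub2_def by blast
    then show ?thesis by (intro bexI[of _ x] bexI[of _ "A j"] bexI[of _ z]) auto
  next
    case 5 then obtain x y where "x \<in> {A i, B i}" "y \<in> {A j, B j}" "distinct [A l, B l, x, y]"
      unfolding hub2_def by blast
    then show ?thesis by (intro bexI[of _ x] bexI[of _ y] bexI[of _ "A l"]) auto
  next
    case 6 then obtain x y z where "x \<in> {A i, B i}" "y \<in> {A j, B j}" "z \<in> {A l, B l}"
      "distinct [A k, B k, x, y, z]"
      unfolding hub3_def by blast
    then show ?thesis by (intro bexI[of _ x] bexI[of _ y] bexI[of _ z]) auto
  qed
qed

definition P5 :: "(nat \<times> nat) set" where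
  "P5 = {(0,1),(0,2),(0,3),(0,4),(1,2),(1,3),(1,4),(2,3),(2,4),(3,4)}"
lemma lt5: "(a::nat) < 5 \<Longrightarrow> a = 0 \<or> a = 1 \<or> a = 2 \<or> a = 3 \<or> a = 4" by auto
lemma P5I: assumes "c < d" "d < 5" shows "(c, d) \<in> P5"
proof -
  have "c < 5" using assms by simp
  from lt5[OF this] lt5[OF assms(2)] assms(1) show ?thesis unfolding P5_def by auto
qed
definition pr :: "nat \<Rightarrow> nat \<Rightarrow> nat \<times> nat" where
  "pr a b = (if a \<noteq> b then (min a b, max a b) else if a = 0 then (0, 1) else (0, a))"
lemma pr_P5: "a < 5 \<Longrightarrow> b < 5 \<Longrightarrow> pr a b \<in> P5"
  unfolding pr_def by (auto intro!: P5I)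
lemma pr_mem: "a \<in> {fst (pr a b), snd (pr a b)}" "b \<in> {fst (pr a b), snd (pr a b)}"
  by (auto simp: pr_def)
lemma card_P5: "card P5 = 10" by (simp add: P5_def)

lemma count5:
  fixes A B :: "nat \<Rightarrow> nat"
  assumes rng: "\<And>j. j < t \<Longrightarrow> A j < 5 \<and> B j < 5"
    and T: "\<And>i j l. i < t \<Longrightarrow> j < t \<Longrightarrow> l < t \<Longrightarrow> i \<noteq> j \<Longrightarrow> i \<noteq> l \<Longrightarrow> j \<noteq> l \<Longrightarrow>
       \<exists>x\<in>{A i, B i}. \<exists>y\<in>{A j, B j}. \<exists>z\<in>{A l, B l}. distinct [x, y, z]"
  shows "t \<le> 20"
proof -
  define F where "F p = {j \<in> {..<t}. pr (A j) (B j) = p}" for p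
  have fib: "card (F p) \<le> 2" for p
  proof (rule ccontr)
    assume "\<not> card (F p) \<le> 2"
    then have "3 \<le> card (F p)" by simp
    then obtain i j l where ijl: "i \<in> F p" "j \<in> F p" "l \<in> F p" "i \<noteq> j" "i \<noteq> l" "j \<noteq> l"
      by (rule three_in)
    have lt: "i < t" "j < t" "l < t" and pp: "pr (A i) (B i) = p" "pr (A j) (B j) = p" "pr (A l) (B l) = p"
      using ijl unfolding F_def by auto
    note m = pr_mem[where a="A i" and b="B i", unfolded pp(1)] pr_mem[where a="A j" and b="B j", unfolded pp(2)]
      pr_mem[where a="A l" and b="B l", unfolded pp(3)]
    obtain x y z where xyz: "x \<in> {A i, B i}" "y \<in> {A j, B j}" "z \<in> {A l, B l}" "distinct [x,y,z]"
      using T[OF lt ijl(4-6)] by blast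
    have "x \<in> {fst p, snd p}" using xyz(1) m by blast
    moreover have "y \<in> {fst p, snd p}" using xyz(2) m by blast
    moreover have "z \<in> {fst p, snd p}" using xyz(3) m by blast
    ultimately show False using xyz(4) by auto
  qed
  have "{..<t} \<subseteq> (\<Union>p\<in>P5. F p)"
    using rng pr_P5 unfolding F_def by blast
  then have "card {..<t} \<le> card (\<Union>p\<in>P5. F p)"
    by (intro card_mono) (auto simp: F_def P5_def)
  also have "\<dots> \<le> (\<Sum>p\<in>P5. card (F p))" by (rule card_UN_le) (simp add: P5_def)
  also have "\<dots> \<le> card P5 * 2" using sum_bounded_above[of P5 "\<lambda>p. card (F p)" 2] fib by simp
  finally show ?thesis by (simp add: card_P5)
qed

lemma ok3_nth: "ok3 A B i j l \<longleftrightarrow> ok3 ((!) [A i, A j, A l]) ((!) [B i, B j, B l]) 0 1 2"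
  by (simp add: ok3_def hub2_def)

lemma card_lt4: "(\<And>x. x \<in> Y \<Longrightarrow> (x::nat) < 4) \<Longrightarrow> card Y \<le> 4"
  using card_mono[of "{..<4::nat}" Y] by fastforce

lemma Aeq:
  assumes X: "X \<subseteq> {..<t}" and eq: "\<And>x y. x \<in> X \<Longrightarrow> y \<in> X \<Longrightarrow> A x = A y"
    and rng: "\<And>j. j < t \<Longrightarrow> B j < 4"
    and T: "\<And>i j l. i < t \<Longrightarrow> j < t \<Longrightarrow> l < t \<Longrightarrow> i \<noteq> j \<Longrightarrow> i \<noteq> l \<Longrightarrow> j \<noteq> l \<Longrightarrow> ok3 A B i j l"
  shows "card X \<le> 4"
proof (cases "card X \<le> 2")
  case True then show ?thesis by simp
next
  case False
  have fin: "finite X" using X finite_subset by blast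
  have inj: "inj_on B X"
  proof (rule inj_onI, rule ccontr)
    fix x y assume xy: "x \<in> X" "y \<in> X" "B x = B y" "x \<noteq> y"
    have "card (X - {x, y}) \<ge> 1"
      using False fin card_Diff_subset[of "{x,y}" X] xy by auto
    then obtain z where z: "z \<in> X" "z \<noteq> x" "z \<noteq> y"
      by (metis Diff_iff card_0_eq fin finite_Diff insertCI not_one_le_zero ex_in_conv)
    have "ok3 A B x y z" using T X xy z by auto
    then have h: "ok3 ((!) [A x, A y, A z]) ((!) [B x, B y, B z]) 0 1 2" using ok3_nth by blast
    have e: "[A x, A y, A z] = [A x, A x, A x]" using eq[of y x] eq[of z x] xy z by simp
    from h[unfolded e] have "distinct [B x, B y, B z]" by (rule F2)
    then show False using xy by simp
  qed
  have "card X = card (B ` X)" using inj by (simp add: card_image)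
  also have "\<dots> \<le> 4" using X rng by (intro card_lt4) auto
  finally show ?thesis .
qed

lemma Beq:
  assumes X: "X \<subseteq> {..<t}" and eq: "\<And>x y. x \<in> X \<Longrightarrow> y \<in> X \<Longrightarrow> B x = B y"
    and rng: "\<And>j. j < t \<Longrightarrow> A j < 4"
    and T: "\<And>i j l. i < t \<Longrightarrow> j < t \<Longrightarrow> l < t \<Longrightarrow> i \<noteq> j \<Longrightarrow> i \<noteq> l \<Longrightarrow> j \<noteq> l \<Longrightarrow> ok3 A B i j l"
  shows "card X \<le> 4"
proof (cases "card X \<le> 2")
  case True then show ?thesis by simp
next
  case False
  have fin: "finite X" using X finite_subset by blast
  have inj: "inj_on A X"
  proof (rule inj_onI, rule ccontr)
    fix x y assume xy: "x \<in> X" "y \<in> X" "A x = A y" "x \<noteq> y"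
    have "card (X - {x, y}) \<ge> 1"
      using False fin card_Diff_subset[of "{x,y}" X] xy by auto
    then obtain z where z: "z \<in> X" "z \<noteq> x" "z \<noteq> y"
      by (metis Diff_iff card_0_eq fin finite_Diff insertCI not_one_le_zero ex_in_conv)
    have "ok3 A B x y z" using T X xy z by auto
    then have h: "ok3 ((!) [A x, A y, A z]) ((!) [B x, B y, B z]) 0 1 2" using ok3_nth by blast
    have e: "[B x, B y, B z] = [B x, B x, B x]" using eq[of y x] eq[of z x] xy z by simp
    from h[unfolded e] have "distinct [A x, A y, A z]" by (rule F2')
    then show False using xy by simp
  qed
  have "card X = card (A ` X)" using inj by (simp add: card_image)
  also have "\<dots> \<le> 4" using X rng by (intro card_lt4) auto
  finally show ?thesis .
qed


lemma F3use:
  assumes o1: "ok3 A B p q r" and o2: "ok3 A B p s r"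
    and Ac: "A p = c" "A q = c" "A s = c" "A r \<noteq> c" and Br: "B r = B p"
    and dB: "distinct [B p, B q, B s]"
    and rng: "c < 4" "A r < 4" "B p < 4" "B q < 4" "B s < 4"
  shows False
proof -
  have h1: "ok3 ((!) [c, c, A r]) ((!) [B p, B q, B p]) 0 1 2"
    using o1 Ac Br by (simp add: ok3_nth[of A B p q r])
  have h2: "ok3 ((!) [c, c, A r]) ((!) [B p, B s, B p]) 0 1 2"
    using o2 Ac Br by (simp add: ok3_nth[of A B p s r])
  have "distinct [c, A r, B p, B q, B s]"
    by (rule F3aux[OF dB _ h1 h2]) (use Ac in auto)
  then show False using dist5 rng by blast
qed

lemma count4:
  fixes A B :: "nat \<Rightarrow> nat"
  assumes rng: "\<And>j. j < t \<Longrightarrow> A j < 4 \<and> B j < 4"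
    and T: "\<And>i j l. i < t \<Longrightarrow> j < t \<Longrightarrow> l < t \<Longrightarrow> i \<noteq> j \<Longrightarrow> i \<noteq> l \<Longrightarrow> j \<noteq> l \<Longrightarrow> ok3 A B i j l"
  shows "t \<le> 8"
proof (cases "\<forall>c<4. card {j \<in> {..<t}. A j = c} \<le> 2")
  case True
  have "{..<t} \<subseteq> (\<Union>c\<in>{..<4}. {j \<in> {..<t}. A j = c})"
  proof
    fix j assume j: "j \<in> {..<t}"
    then have "A j < 4" using rng by simp
    then show "j \<in> (\<Union>c\<in>{..<4}. {j \<in> {..<t}. A j = c})" using j by blast
  qed
  then have "card {..<t} \<le> card (\<Union>c\<in>{..<4::nat}. {j \<in> {..<t}. A j = c})"
    by (intro card_mono) auto
  also have "\<dots> \<le> (\<Sum>c\<in>{..<4::nat}. card {j \<in> {..<t}. A j = c})" by (rule card_UN_le) simp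
  also have "\<dots> \<le> card {..<4::nat} * 2"
    using sum_bounded_above[of "{..<4::nat}" "\<lambda>c. card {j \<in> {..<t}. A j = c}" 2] True by simp
  finally show ?thesis by simp
next
  case False
  then obtain c where c: "c < 4" "\<not> card {j \<in> {..<t}. A j = c} \<le> 2" by auto
  define Ac where "Ac = {j \<in> {..<t}. A j = c}"
  have "3 \<le> card Ac" using c unfolding Ac_def by simp
  then obtain i j l where ijl: "i \<in> Ac" "j \<in> Ac" "l \<in> Ac" "i \<noteq> j" "i \<noteq> l" "j \<noteq> l"
    by (rule three_in)
  have lt: "i < t" "j < t" "l < t" and Ai: "A i = c" "A j = c" "A l = c" using ijl unfolding Ac_def by auto
  have dB: "distinct [B i, B j, B l]"
  proof -
    have h: "ok3 ((!) [A i, A j, A l]) ((!) [B i, B j, B l]) 0 1 2" using T[OF lt ijl(4-6)] ok3_nth by blast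
    have e: "[A i, A j, A l] = [c, c, c]" using Ai by simp
    from h[unfolded e] show ?thesis by (rule F2)
  qed
  define Y where "Y = {r \<in> {..<t}. B r \<notin> {B i, B j, B l}}"
  have Yeq: "B r = B r'" if "r \<in> Y" "r' \<in> Y" for r r'
  proof (rule ccontr)
    assume "B r \<noteq> B r'"
    then have "distinct [B r, B r', B i, B j, B l]" using that dB unfolding Y_def by auto
    moreover have "r < t" "r' < t" using that unfolding Y_def by auto
    ultimately show False using dist5 rng lt by metis
  qed
  have cover: "{..<t} \<subseteq> Ac \<union> Y"
  proof
    fix r assume r: "r \<in> {..<t}"
    show "r \<in> Ac \<union> Y"
    proof (cases "A r = c")
      case True then show ?thesis using r unfolding Ac_def by simp
    next
      case False
      have rne: "r \<noteq> i" "r \<noteq> j" "r \<noteq> l" using False Ai by auto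
      have rt: "r < t" using r by simp
      have R: "A r < 4" "B i < 4" "B j < 4" "B l < 4" using rng rt lt by auto
      have "B r \<noteq> B i"
      proof
        assume "B r = B i"
        show False
          by (rule F3use[OF T[OF lt(1,2) rt ijl(4) rne(1)[symmetric] rne(2)[symmetric]]
                T[OF lt(1,3) rt ijl(5) rne(1)[symmetric] rne(3)[symmetric]]])
            (use Ai False \<open>B r = B i\<close> dB c R in auto)
      qed
      moreover have "B r \<noteq> B j"
      proof
        assume "B r = B j"
        show False
          by (rule F3use[OF T[OF lt(2,1) rt ijl(4)[symmetric] rne(2)[symmetric] rne(1)[symmetric]]
                T[OF lt(2,3) rt ijl(6) rne(2)[symmetric] rne(3)[symmetric]]])
            (use Ai False \<open>B r = B j\<close> dB c R in auto)
      qed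
      moreover have "B r \<noteq> B l"
      proof
        assume "B r = B l"
        show False
          by (rule F3use[OF T[OF lt(3,1) rt ijl(5)[symmetric] rne(3)[symmetric] rne(1)[symmetric]]
                T[OF lt(3,2) rt ijl(6)[symmetric] rne(3)[symmetric] rne(2)[symmetric]]])
            (use Ai False \<open>B r = B l\<close> dB c R in auto)
      qed
      ultimately show ?thesis using r unfolding Y_def by simp
    qed
  qed
  have cA: "card Ac \<le> 4"
  proof (rule Aeq[of Ac t A B])
    show "Ac \<subseteq> {..<t}" by (auto simp: Ac_def)
    show "\<And>x y. x \<in> Ac \<Longrightarrow> y \<in> Ac \<Longrightarrow> A x = A y" by (auto simp: Ac_def)
    show "\<And>j. j < t \<Longrightarrow> B j < 4" using rng by blast
    show "\<And>i j l. i < t \<Longrightarrow> j < t \<Longrightarrow> l < t \<Longrightarrow> i \<noteq> j \<Longrightarrow> i \<noteq> l \<Longrightarrow> j \<noteq> l \<Longrightarrow> ok3 A B i j l"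
      by (rule T)
  qed
  have cY: "card Y \<le> 4"
  proof (rule Beq[of Y t B A])
    show "Y \<subseteq> {..<t}" by (auto simp: Y_def)
    show "\<And>x y. x \<in> Y \<Longrightarrow> y \<in> Y \<Longrightarrow> B x = B y" by (rule Yeq)
    show "\<And>j. j < t \<Longrightarrow> A j < 4" using rng by blast
    show "\<And>i j l. i < t \<Longrightarrow> j < t \<Longrightarrow> l < t \<Longrightarrow> i \<noteq> j \<Longrightarrow> i \<noteq> l \<Longrightarrow> j \<noteq> l \<Longrightarrow> ok3 A B i j l"
      by (rule T)
  qed
  have "card {..<t} \<le> card (Ac \<union> Y)"
    by (rule card_mono[OF _ cover]) (auto simp: Ac_def Y_def)
  also have "\<dots> \<le> card Ac + card Y" by (rule card_Un_le)
  finally show ?thesis using cA cY by simp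
qed


lemma finite_K2_E: "finite (K2_E t)"
proof -
  have "K2_E t = (\<lambda>(i, j). {Inl i, Inr j}) ` ({..<2} \<times> {..<t})"
    unfolding K2_E_def by auto
  then show ?thesis by simp
qed

lemma normalize:
  assumes tr: "three_rainbow_coloring (K2_V t) (K2_E t) col"
    and cm: "card (col ` K2_E t) \<le> m"
  shows "\<exists>A B. (\<forall>j<t. A j < m \<and> B j < m) \<and>
     (\<forall>i j l. i < t \<longrightarrow> j < t \<longrightarrow> l < t \<longrightarrow> i \<noteq> j \<longrightarrow> i \<noteq> l \<longrightarrow> j \<noteq> l \<longrightarrow>
        ok3 A B i j l \<or> (\<exists>k<t. hub3 A B k i j l))"
proof -
  let ?C = "col ` K2_E t"
  have fC: "finite ?C" using finite_K2_E by simp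
  obtain h where h: "bij_betw h ?C {0..<card ?C}" using ex_bij_betw_finite_nat[OF fC] by blast
  define A where "A j = h (col (eu j))" for j
  define B where "B j = h (col (ev j))" for j
  interpret colK2 t "h \<circ> col" A B
    by unfold_locales (simp_all add: A_def B_def)
  have rng: "\<forall>j<t. A j < m \<and> B j < m"
  proof (intro allI impI)
    fix j assume j: "j < t"
    have "col (eu j) \<in> ?C" "col (ev j) \<in> ?C" using j by auto
    then have "A j < card ?C" "B j < card ?C"
      using bij_betw_apply[OF h] unfolding A_def B_def by auto
    then show "A j < m \<and> B j < m" using cm by simp
  qed
  have trip: "ok3 A B i j l \<or> (\<exists>k<t. hub3 A B k i j l)"
    if lt: "i < t" "j < t" "l < t" and d: "i \<noteq> j" "i \<noteq> l" "j \<noteq> l" for i j l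
  proof -
    let ?S = "{Inr i, Inr j, Inr l} :: (nat + nat) set"
    have SV: "?S \<subseteq> K2_V t" using lt by (auto simp: K2_V_def)
    have c3: "card ?S = 3" using d by simp
    obtain VT ET where st: "S_tree (K2_V t) (K2_E t) ?S VT ET" and rb: "rainbow col ET"
      using tr SV c3 unfolding three_rainbow_coloring_def by blast
    have ETs: "ET \<subseteq> K2_E t" using st unfolding S_tree_def by blast
    have "inj_on h (col ` ET)"
      by (rule inj_on_subset[OF bij_betw_imp_inj_on[OF h]]) (use ETs in auto)
    then have "rainbow (h \<circ> col) ET" using rb unfolding rainbow_def by (rule comp_inj_on[rotated])
    then show ?thesis using extract3[OF st _ _ _ _ d] by simp
  qed
  show ?thesis using rng trip by blast
qed

lemma lower4:
  assumes tr: "three_rainbow_coloring (K2_V t) (K2_E t) col" and t: "9 \<le> t"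
  shows "5 \<le> card (col ` K2_E t)"
proof (rule ccontr)
  assume "\<not> 5 \<le> card (col ` K2_E t)"
  then have "card (col ` K2_E t) \<le> 4" by simp
  from normalize[OF tr this] obtain A B where rng: "\<forall>j<t. A j < 4 \<and> B j < 4"
    and T: "\<forall>i j l. i < t \<longrightarrow> j < t \<longrightarrow> l < t \<longrightarrow> i \<noteq> j \<longrightarrow> i \<noteq> l \<longrightarrow> j \<noteq> l \<longrightarrow>
        ok3 A B i j l \<or> (\<exists>k<t. hub3 A B k i j l)" by blast
  have T': "ok3 A B i j l" if ijl: "i < t" "j < t" "l < t" "i \<noteq> j" "i \<noteq> l" "j \<noteq> l" for i j l
  proof -
    have no5: "\<not> hub3 A B k i j l" if k: "k < t" for k
    proof
      assume "hub3 A B k i j l"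
      then obtain x y z where xyz: "x \<in> {A i, B i}" "y \<in> {A j, B j}" "z \<in> {A l, B l}"
        "distinct [A k, B k, x, y, z]" unfolding hub3_def by blast
      have "A k < 4" "B k < 4" "x < 4" "y < 4" "z < 4" using rng k xyz(1-3) ijl(1-3) by auto
      then show False using dist5[OF xyz(4)] by blast
    qed
    show ?thesis using T ijl no5 by blast
  qed
  have "t \<le> 8" by (rule count4[of t A B]) (use rng T' in auto)
  then show False using t by simp
qed

lemma lower5:
  assumes tr: "three_rainbow_coloring (K2_V t) (K2_E t) col" and t: "21 \<le> t"
  shows "6 \<le> card (col ` K2_E t)"
proof (rule ccontr)
  assume "\<not> 6 \<le> card (col ` K2_E t)"
  then have "card (col ` K2_E t) \<le> 5" by simp
  from normalize[OF tr this] obtain A B where rng: "\<forall>j<t. A j < 5 \<and> B j < 5"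
    and T: "\<forall>i j l. i < t \<longrightarrow> j < t \<longrightarrow> l < t \<longrightarrow> i \<noteq> j \<longrightarrow> i \<noteq> l \<longrightarrow> j \<noteq> l \<longrightarrow>
        ok3 A B i j l \<or> (\<exists>k<t. hub3 A B k i j l)" by blast
  have T': "\<exists>x\<in>{A i, B i}. \<exists>y\<in>{A j, B j}. \<exists>z\<in>{A l, B l}. distinct [x, y, z]"
    if ijl: "i < t" "j < t" "l < t" "i \<noteq> j" "i \<noteq> l" "j \<noteq> l" for i j l
  proof (rule tri)
    show "ok3 A B i j l \<or> (\<exists>k. hub3 A B k i j l)" using T ijl by blast
  qed
  have "t \<le> 20" by (rule count5[of t A B]) (use rng T' in auto)
  then show False using t by simp
qed

definition wid :: "(nat + nat) set \<Rightarrow> nat" where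
  "wid e = (SOME j. Inr j \<in> e)"

definition mkcol :: "(nat \<Rightarrow> nat) \<Rightarrow> (nat \<Rightarrow> nat) \<Rightarrow> (nat + nat) set \<Rightarrow> nat" where
  "mkcol A B e = (if Inl 0 \<in> e then A (wid e) else B (wid e))"

lemma wid_eq: "wid {Inl a, Inr j} = j"
  unfolding wid_def by (rule some_equality) auto

lemma mkcol_eu: "mkcol A B (eu j) = A j" by (simp add: mkcol_def wid_eq)
lemma mkcol_ev: "mkcol A B (ev j) = B j" by (simp add: mkcol_def wid_eq)
lemma mkcol_ev': "mkcol A B {Inl (Suc 0), Inr j} = B j" by (simp add: mkcol_def wid_eq)

lemma K2_E_split: "K2_E t = eu ` {..<t} \<union> ev ` {..<t}"
proof
  show "K2_E t \<subseteq> eu ` {..<t} \<union> ev ` {..<t}"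
  proof
    fix e assume "e \<in> K2_E t"
    then obtain i j where e: "e = {Inl i, Inr j}" "i < 2" "j < t" unfolding K2_E_iff by blast
    then have "i = 0 \<or> i = 1" by auto
    then show "e \<in> eu ` {..<t} \<union> ev ` {..<t}" using e by auto
  qed
next
  show "eu ` {..<t} \<union> ev ` {..<t} \<subseteq> K2_E t" by auto
qed

lemma mkcol_image: "mkcol A B ` K2_E t = A ` {..<t} \<union> B ` {..<t}"
  unfolding K2_E_split image_Un image_image mkcol_eu mkcol_ev by simp

lemma d3a: "distinct [x,y,z] = distinct [y,x,z]" by auto
lemma d3b: "distinct [x,y,z] = distinct [x,z,y]" by auto
lemma d4: "distinct [a,b,x,y] = distinct [a,b,y,x]" by auto
lemma d5a: "distinct [a,b,x,y,z] = distinct [a,b,y,x,z]" by auto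
lemma d5b: "distinct [a,b,x,y,z] = distinct [a,b,x,z,y]" by auto

lemma hub2_comm: "hub2 A B k i j = hub2 A B k j i"
  unfolding hub2_def by (subst d4) blast
lemma hub3_a: "hub3 A B k i j l = hub3 A B k j i l"
  unfolding hub3_def by (subst d5a) blast
lemma hub3_b: "hub3 A B k i j l = hub3 A B k i l j"
  unfolding hub3_def by (subst d5b) blast

lemma ok3_swap1: "ok3 A B i j l \<Longrightarrow> ok3 A B j i l"
  unfolding ok3_def using d3a[of "A i" "A j" "A l"] d3a[of "B i" "B j" "B l"] hub2_comm[of A B l i j] by blast
lemma ok3_swap2: "ok3 A B i j l \<Longrightarrow> ok3 A B i l j"
  unfolding ok3_def using d3b[of "A i" "A j" "A l"] d3b[of "B i" "B j" "B l"] hub2_comm[of A B i j l] by blast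

lemma okT_swap1: "okT A B n i j l \<Longrightarrow> okT A B n j i l"
  unfolding okT_def using ok3_swap1 hub3_a by blast
lemma okT_swap2: "okT A B n i j l \<Longrightarrow> okT A B n i l j"
  unfolding okT_def using ok3_swap2 hub3_b by blast

lemma okT_all:
  assumes S: "\<And>i j l. i < j \<Longrightarrow> j < l \<Longrightarrow> l < n \<Longrightarrow> okT A B n i j l"
    and d: "i < n" "j < n" "l < n" "i \<noteq> j" "i \<noteq> l" "j \<noteq> l"
  shows "okT A B n i j l"
proof -
  consider "i < j" "j < l" | "i < l" "l < j" | "j < i" "i < l" | "j < l" "l < i" | "l < i" "i < j" | "l < j" "j < i"
    using d by linarith
  then show ?thesis
  proof cases
    case 1 then show ?thesis using S d by blast
  next
    case 2 then show ?thesis using S[of i l j] d okT_swap2 by blast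
  next
    case 3 then show ?thesis using S[of j i l] d okT_swap1 by blast
  next
    case 4 then show ?thesis using S[of j l i] d okT_swap1 okT_swap2 by blast
  next
    case 5 then show ?thesis using S[of l i j] d okT_swap1 okT_swap2 by blast
  next
    case 6 then show ?thesis using S[of l j i] d okT_swap1 okT_swap2 by blast
  qed
qed

lemma length_LL: "length LL = 20" by (simp add: LL_def)

lemma set_nth_image: "set xs = (\<lambda>i. xs ! i) ` {..<length xs}"
  by (auto simp: in_set_conv_nth image_def)

lemma upper:
  assumes t: "9 \<le> t" "t \<le> 20"
  shows "\<exists>col. three_rainbow_coloring (K2_V t) (K2_E t) col \<and> card (col ` K2_E t) = 5"
proof -
  define L where "L = take t LL"
  have lenL: "length L = t" using t length_LL by (simp add: L_def)
  have "t \<in> set [9..<21]" unfolding set_upt using t by simp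
  then have ck: "chk L" and cs: "set (map fst L @ map snd L) = {0..<5}"
    using upper_comp unfolding L_def by blast+
  define A where "A = (\<lambda>j. fst (L ! j))"
  define B where "B = (\<lambda>j. snd (L ! j))"
  interpret colK2 t "mkcol A B" A B
    by unfold_locales (simp_all add: mkcol_eu mkcol_ev mkcol_ev')
  have ck': "distinct L \<and> (\<forall>p\<in>set L. fst p \<noteq> snd p) \<and>
     (\<forall>i\<in>set [0..<t]. \<forall>j\<in>set [i+1..<t]. \<forall>l\<in>set [j+1..<t]. okT A B t i j l)"
    using ck unfolding chk_def Let_def lenL A_def B_def .
  have dL: "distinct L" and nd: "\<forall>p\<in>set L. fst p \<noteq> snd p"
    and tri: "\<forall>i\<in>set [0..<t]. \<forall>j\<in>set [i+1..<t]. \<forall>l\<in>set [j+1..<t]. okT A B t i j l"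
    using ck' by blast+
  have H1: "\<forall>j<t. A j \<noteq> B j"
  proof (intro allI impI)
    fix j assume "j < t"
    then have "L ! j \<in> set L" using lenL by simp
    then show "A j \<noteq> B j" using nd unfolding A_def B_def by blast
  qed
  have H2: "\<forall>i<t. \<forall>j<t. i \<noteq> j \<longrightarrow> A i = A j \<longrightarrow> B i \<noteq> B j"
  proof (intro allI impI)
    fix i j assume "i < t" "j < t" "i \<noteq> j" "A i = A j"
    then have "L ! i \<noteq> L ! j" using dL lenL nth_eq_iff_index_eq by metis
    then show "B i \<noteq> B j" using \<open>A i = A j\<close> unfolding A_def B_def by (simp add: prod_eq_iff)
  qed
  have S: "okT A B t i j l" if "i < j" "j < l" "l < t" for i j l
  proof -
    have "i \<in> set [0..<t]" "j \<in> set [i+1..<t]" "l \<in> set [j+1..<t]" using that by simp_all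
    then show ?thesis using tri by blast
  qed
  have H3: "\<forall>i j l. i < t \<longrightarrow> j < t \<longrightarrow> l < t \<longrightarrow> i \<noteq> j \<longrightarrow> i \<noteq> l \<longrightarrow> j \<noteq> l \<longrightarrow> okT A B t i j l"
  proof (intro allI impI)
    fix i j l assume d: "i < t" "j < t" "l < t" "i \<noteq> j" "i \<noteq> l" "j \<noteq> l"
    show "okT A B t i j l"
      by (rule okT_all[where n=t and A=A and B=B]) (use S d in auto)
  qed
  have good: "three_rainbow_coloring (K2_V t) (K2_E t) (mkcol A B)" by (rule sound[OF H1 H2 H3])
  have "set (map fst L) = A ` {..<t}" "set (map snd L) = B ` {..<t}"
    unfolding A_def B_def set_map set_nth_image[of L] lenL image_image by simp_all
  then have "mkcol A B ` K2_E t = {0..<5}" using cs mkcol_image by simp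
  then show ?thesis using good by (intro exI[of _ "mkcol A B"]) simp
qed

lemma exists_col: "\<exists>col. three_rainbow_coloring (K2_V t) (K2_E t) col"
proof -
  define A where "A j = 2 * j" for j :: nat
  define B where "B j = 2 * j + 1" for j :: nat
  interpret colK2 t "mkcol A B" A B
    by unfold_locales (simp_all add: mkcol_eu mkcol_ev mkcol_ev')
  have "three_rainbow_coloring (K2_V t) (K2_E t) (mkcol A B)"
    by (rule sound) (simp_all add: A_def B_def okT_def ok3_def)
  then show ?thesis by blast
qed

theorem lemma5:
  shows "(\<forall>t::nat. 9 \<le> t \<and> t \<le> 20 \<longrightarrow> rx3 (K2_V t) (K2_E t) = 5)
       \<and> (\<forall>t::nat. 21 \<le> t \<longrightarrow> rx3 (K2_V t) (K2_E t) \<ge> 6)"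
proof (intro conjI allI impI)
  fix t :: nat assume t: "9 \<le> t \<and> t \<le> 20"
  show "rx3 (K2_V t) (K2_E t) = 5"
    unfolding rx3_def
  proof (rule Least_equality)
    show "\<exists>c. three_rainbow_coloring (K2_V t) (K2_E t) c \<and> card (c ` K2_E t) = 5"
      using upper t by blast
  next
    fix y assume "\<exists>c. three_rainbow_coloring (K2_V t) (K2_E t) c \<and> card (c ` K2_E t) = y"
    then show "5 \<le> y" using lower4 t by blast
  qed
next
  fix t :: nat assume t: "21 \<le> t"
  obtain c0 where c0: "three_rainbow_coloring (K2_V t) (K2_E t) c0" using exists_col by blast
  have "\<exists>c. three_rainbow_coloring (K2_V t) (K2_E t) c \<and> card (c ` K2_E t) = rx3 (K2_V t) (K2_E t)"
    unfolding rx3_def by (rule LeastI_ex) (use c0 in blast)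
  then obtain c where c: "three_rainbow_coloring (K2_V t) (K2_E t) c"
    "card (c ` K2_E t) = rx3 (K2_V t) (K2_E t)" by blast
  show "rx3 (K2_V t) (K2_E t) \<ge> 6" using lower5[OF c(1) t] c(2) by simp
qed


end
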